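(* Let $W_\Gamma$ be a graph product on a finite graph $\Gamma=(V,E)$ with every vertex group primary or infinite cyclic, and assume no vertex $v\in V$ satisfies $st(v)=V$. Suppose $V=V_1\sqcup V_2$ with $V_1,V_2$ non-empty and the natural map $W_{\Gamma_{V_1}}\times W_{\Gamma_{V_2}}\to W_\Gamma$ is an isomorphism. Then both $V_1$ and $V_2$ are lower cones with respect to $\le_\tau$.
   Context: Graph: $\Gamma=(V,E)$, $V$ non-empty finite, $E$ a set of 2-element subsets; $lk(v)=\{x:\{v,x\}\in E\}$, $st(v)=lk(v)\cup\{v\}$; $W_{\Gamma_X}$ the subgroup generated by $G_v$, $v\in X$ (the graph product on the full subgraph spanned by $X$). A group is primary if cyclic of order $p^k$, $p$ prime, $k\ge1$. Relation $\le_\tau$ on $V$: $v\le_\tau v$; for $v\neq w$, $v\le_\tau w$ iff either (a) $|G_v|=\infty$ and $lk(v)\subset st(w)$, or (b) $|G_v|=p^k$, $|G_w|=p^\ell$ for the same prime $p$ and $st(v)\subset st(w)$. $X\subset V$ is a lower cone if $t\in X$, $s\in V$, $s\le_\tau t$ imply $s\in X$. *)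

theory Defs
  imports "HOL-Algebra.Algebra" "HOL-Computational_Algebra.Primes"
begin

definition simple_graph :: "'v set \<Rightarrow> 'v set set \<Rightarrow> bool" where
  "simple_graph V E \<longleftrightarrow> finite V \<and> V \<noteq> {} \<and>
     (\<forall>e\<in>E. e \<subseteq> V \<and> card e = 2)"

definition lk :: "'v set set \<Rightarrow> 'v \<Rightarrow> 'v set" where
  "lk E v = {x. {v, x} \<in> E}"

definition st :: "'v set set \<Rightarrow> 'v \<Rightarrow> 'v set" where
  "st E v = lk E v \<union> {v}"

definition cyclic_grp :: "('g, 'm) monoid_scheme \<Rightarrow> bool" where
  "cyclic_grp H \<longleftrightarrow> group H \<and> (\<exists>x\<in>carrier H. carrier H = generate H {x})"

definition primary_grp :: "('g, 'm) monoid_scheme \<Rightarrow> bool" where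
  "primary_grp H \<longleftrightarrow> cyclic_grp H \<and> finite (carrier H) \<and>
     (\<exists>p k. Factorial_Ring.prime (p::nat) \<and> k \<ge> 1 \<and> order H = p ^ k)"

definition infinite_cyclic_grp :: "('g, 'm) monoid_scheme \<Rightarrow> bool" where
  "infinite_cyclic_grp H \<longleftrightarrow> cyclic_grp H \<and> infinite (carrier H)"

definition gp_word :: "'v set \<Rightarrow> ('v \<Rightarrow> 'g monoid) \<Rightarrow> ('v \<times> 'g) list \<Rightarrow> bool" where
  "gp_word V Gr w \<longleftrightarrow> (\<forall>(v, g) \<in> set w. v \<in> V \<and> g \<in> carrier (Gr v))"

inductive gp_rel :: "'v set \<Rightarrow> 'v set set \<Rightarrow> ('v \<Rightarrow> 'g monoid)
    \<Rightarrow> ('v \<times> 'g) list \<Rightarrow> ('v \<times> 'g) list \<Rightarrow> bool"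
  for V E Gr where
  triv: "v \<in> V \<Longrightarrow> gp_rel V E Gr [(v, \<one>\<^bsub>Gr v\<^esub>)] []"
| mult: "v \<in> V \<Longrightarrow> g \<in> carrier (Gr v) \<Longrightarrow> h \<in> carrier (Gr v) \<Longrightarrow>
         gp_rel V E Gr [(v, g), (v, h)] [(v, g \<otimes>\<^bsub>Gr v\<^esub> h)]"
| comm: "{v, w} \<in> E \<Longrightarrow> g \<in> carrier (Gr v) \<Longrightarrow> h \<in> carrier (Gr w) \<Longrightarrow>
         gp_rel V E Gr [(v, g), (w, h)] [(w, h), (v, g)]"
| refl: "gp_word V Gr a \<Longrightarrow> gp_rel V E Gr a a"
| sym: "gp_rel V E Gr a b \<Longrightarrow> gp_rel V E Gr b a"
| trans: "gp_rel V E Gr a b \<Longrightarrow> gp_rel V E Gr b c \<Longrightarrow> gp_rel V E Gr a c"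
| ctxt: "gp_rel V E Gr a b \<Longrightarrow> gp_word V Gr xs \<Longrightarrow> gp_word V Gr ys \<Longrightarrow>
         gp_rel V E Gr (xs @ a @ ys) (xs @ b @ ys)"

definition gp_class :: "'v set \<Rightarrow> 'v set set \<Rightarrow> ('v \<Rightarrow> 'g monoid)
    \<Rightarrow> ('v \<times> 'g) list \<Rightarrow> ('v \<times> 'g) list set" where
  "gp_class V E Gr w = {w'. gp_rel V E Gr w w'}"

definition graph_product :: "'v set \<Rightarrow> 'v set set \<Rightarrow> ('v \<Rightarrow> 'g monoid)
    \<Rightarrow> ('v \<times> 'g) list set monoid" where
  "graph_product V E Gr =
     \<lparr> partial_object.carrier = gp_class V E Gr ` {w. gp_word V Gr w},
       monoid.mult = (\<lambda>A B. {c. \<exists>a\<in>A. \<exists>b\<in>B. gp_rel V E Gr (a @ b) c}),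
       monoid.one = gp_class V E Gr [] \<rparr>"

definition gp_incl :: "'v set \<Rightarrow> 'v set set \<Rightarrow> ('v \<Rightarrow> 'g monoid)
    \<Rightarrow> 'v \<Rightarrow> 'g \<Rightarrow> ('v \<times> 'g) list set" where
  "gp_incl V E Gr v g = gp_class V E Gr [(v, g)]"

definition gp_sub :: "'v set \<Rightarrow> 'v set set \<Rightarrow> ('v \<Rightarrow> 'g monoid)
    \<Rightarrow> 'v set \<Rightarrow> ('v \<times> 'g) list set set" where
  "gp_sub V E Gr Xs = generate (graph_product V E Gr)
                      (\<Union> ((\<lambda>v. gp_incl V E Gr v ` carrier (Gr v)) ` Xs))"

definition le_tau :: "'v set set \<Rightarrow> ('v \<Rightarrow> 'g monoid) \<Rightarrow> 'v \<Rightarrow> 'v \<Rightarrow> bool" where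
  "le_tau E Gr v w \<longleftrightarrow> v = w \<or>
     (v \<noteq> w \<and>
       ((infinite (carrier (Gr v)) \<and> lk E v \<subseteq> st E w) \<or>
        ((\<exists>p k l. Factorial_Ring.prime (p::nat) \<and> k \<ge> 1 \<and> l \<ge> 1 \<and>
            finite (carrier (Gr v)) \<and> finite (carrier (Gr w)) \<and>
            order (Gr v) = p ^ k \<and> order (Gr w) = p ^ l) \<and>
         st E v \<subseteq> st E w)))"

definition lower_cone :: "'v set \<Rightarrow> 'v set set \<Rightarrow> ('v \<Rightarrow> 'g monoid) \<Rightarrow> 'v set \<Rightarrow> bool" where
  "lower_cone V E Gr Xs \<longleftrightarrow> Xs \<subseteq> V \<and>
     (\<forall>t\<in>Xs. \<forall>s\<in>V. le_tau E Gr s t \<longrightarrow> s \<in> Xs)"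

end

theory Submission imports Defs begin

definition valL :: "'g monoid \<Rightarrow> ('g + 'g) option \<Rightarrow> 'g" where
  "valL G p = (case p of Some (Inl x) \<Rightarrow> x | _ \<Rightarrow> \<one>\<^bsub>G\<^esub>)"
definition valR :: "'g monoid \<Rightarrow> ('g + 'g) option \<Rightarrow> 'g" where
  "valR G p = (case p of Some (Inr x) \<Rightarrow> x | _ \<Rightarrow> \<one>\<^bsub>G\<^esub>)"
definition nzL :: "'g monoid \<Rightarrow> 'g \<Rightarrow> ('g + 'g) option" where
  "nzL G z = (if z = \<one>\<^bsub>G\<^esub> then None else Some (Inl z))"
definition nzR :: "'g monoid \<Rightarrow> 'g \<Rightarrow> ('g + 'g) option" where
  "nzR G z = (if z = \<one>\<^bsub>G\<^esub> then None else Some (Inr z))"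
definition actL :: "'g monoid \<Rightarrow> 'g \<Rightarrow> ('g + 'g) option \<Rightarrow> ('g + 'g) option" where
  "actL G g p = (case p of Some (Inr y) \<Rightarrow> p | _ \<Rightarrow> nzL G (g \<otimes>\<^bsub>G\<^esub> valL G p))"
definition actR :: "'g monoid \<Rightarrow> 'g \<Rightarrow> ('g + 'g) option \<Rightarrow> ('g + 'g) option" where
  "actR G g p = (case p of Some (Inl y) \<Rightarrow> p | _ \<Rightarrow> nzR G (g \<otimes>\<^bsub>G\<^esub> valR G p))"
definition P0 :: "'g monoid \<Rightarrow> 'g monoid \<Rightarrow> ('g + 'g) option set" where
  "P0 A B = {None} \<union> (Some \<circ> Inl) ` (carrier A - {\<one>\<^bsub>A\<^esub>}) \<union> (Some \<circ> Inr) ` (carrier B - {\<one>\<^bsub>B\<^esub>})"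

definition actU :: "'v \<Rightarrow> 'v \<Rightarrow> ('v \<Rightarrow> 'g monoid) \<Rightarrow> 'v \<times> 'g \<Rightarrow> ('g + 'g) option \<Rightarrow> ('g + 'g) option" where
  "actU v w Gr l p = (if fst l = v then actL (Gr v) (snd l) p
      else if fst l = w then actR (Gr w) (snd l) p else p)"

definition actW where "actW v w Gr xs p = foldr (actU v w Gr) xs p"

lemma actW_append: "actW v w Gr (xs @ ys) p = actW v w Gr xs (actW v w Gr ys p)"
  by (simp add: actW_def)

lemma P0_cases: "p \<in> P0 A B \<Longrightarrow> p = None \<or> (\<exists>x\<in>carrier A. x \<noteq> \<one>\<^bsub>A\<^esub> \<and> p = Some (Inl x))
   \<or> (\<exists>x\<in>carrier B. x \<noteq> \<one>\<^bsub>B\<^esub> \<and> p = Some (Inr x))"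
  unfolding P0_def by auto

lemma actL_P0: "group A \<Longrightarrow> g \<in> carrier A \<Longrightarrow> p \<in> P0 A B \<Longrightarrow> actL A g p \<in> P0 A B"
  apply (drule P0_cases[of p])
  apply (auto simp: actL_def nzL_def valL_def P0_def group.is_monoid monoid.m_closed monoid.r_one split: if_splits)
  done

lemma actR_P0: "group B \<Longrightarrow> g \<in> carrier B \<Longrightarrow> p \<in> P0 A B \<Longrightarrow> actR B g p \<in> P0 A B"
  apply (drule P0_cases[of p])
  apply (auto simp: actR_def nzR_def valR_def P0_def group.is_monoid monoid.m_closed monoid.r_one split: if_splits)
  done

lemma actL_one: "group A \<Longrightarrow> p \<in> P0 A B \<Longrightarrow> actL A \<one>\<^bsub>A\<^esub> p = p"
  apply (drule P0_cases[of p])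
  apply (auto simp: actL_def nzL_def valL_def group.is_monoid monoid.l_one)
  done

lemma actR_one: "group B \<Longrightarrow> p \<in> P0 A B \<Longrightarrow> actR B \<one>\<^bsub>B\<^esub> p = p"
  apply (drule P0_cases[of p])
  apply (auto simp: actR_def nzR_def valR_def group.is_monoid monoid.l_one)
  done

lemma actL_mult: "group A \<Longrightarrow> g \<in> carrier A \<Longrightarrow> h \<in> carrier A \<Longrightarrow> p \<in> P0 A B \<Longrightarrow>
   actL A g (actL A h p) = actL A (g \<otimes>\<^bsub>A\<^esub> h) p"
  apply (drule P0_cases[of p])
  apply (auto simp: actL_def nzL_def valL_def group.is_monoid monoid.r_one monoid.m_assoc monoid.l_one)
  done

lemma actR_mult: "group B \<Longrightarrow> g \<in> carrier B \<Longrightarrow> h \<in> carrier B \<Longrightarrow> p \<in> P0 A B \<Longrightarrow>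
   actR B g (actR B h p) = actR B (g \<otimes>\<^bsub>B\<^esub> h) p"
  apply (drule P0_cases[of p])
  apply (auto simp: actR_def nzR_def valR_def group.is_monoid monoid.r_one monoid.m_assoc monoid.l_one)
  done


lemma actW_P0:
  assumes "group (Gr v)" "group (Gr w)"
  shows "gp_word V Gr xs \<Longrightarrow> p \<in> P0 (Gr v) (Gr w) \<Longrightarrow> actW v w Gr xs p \<in> P0 (Gr v) (Gr w)"
proof (induction xs)
  case Nil then show ?case by (simp add: actW_def)
next
  case (Cons l xs)
  obtain u g where l: "l = (u, g)" by force
  have w: "gp_word V Gr xs" and g: "g \<in> carrier (Gr u)" using Cons.prems l by (auto simp: gp_word_def)
  have q: "actW v w Gr xs p \<in> P0 (Gr v) (Gr w)" using Cons w by blast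
  show ?case using q g assms l
    by (auto simp: actW_def actU_def intro: actL_P0 actR_P0)
qed

lemma rel_act:
  assumes gv: "group (Gr v)" and gw: "group (Gr w)" and vw: "v \<noteq> w" "{v, w} \<notin> E"
    and card: "\<forall>e\<in>E. card e = 2"
  shows "gp_rel V E Gr a b \<Longrightarrow> \<forall>p\<in>P0 (Gr v) (Gr w). actW v w Gr a p = actW v w Gr b p"
proof (induction rule: gp_rel.induct)
  case (triv u)
  then show ?case using gv gw by (auto simp: actW_def actU_def actL_one actR_one)
next
  case (mult u g h)
  then show ?case using gv gw by (auto simp: actW_def actU_def actL_mult actR_mult)
next
  case (comm u u' g h)
  have "u \<noteq> u'" using comm card by force
  then show ?case using comm vw by (auto simp: actW_def actU_def insert_commute)
next
  case (refl a) then show ?case by simp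
next
  case (sym a b) then show ?case by simp
next
  case (trans a b c) then show ?case by simp
next
  case (ctxt a b xs ys)
  show ?case
  proof
    fix p assume p: "p \<in> P0 (Gr v) (Gr w)"
    have "actW v w Gr ys p \<in> P0 (Gr v) (Gr w)" using actW_P0[of Gr v w, OF gv gw] ctxt p by blast
    then show "actW v w Gr (xs @ a @ ys) p = actW v w Gr (xs @ b @ ys) p"
      using ctxt by (simp add: actW_append)
  qed
qed

lemma noncomm:
  assumes gv: "group (Gr v)" and gw: "group (Gr w)" and vw: "v \<noteq> w" "{v, w} \<notin> E"
    and card: "\<forall>e\<in>E. card e = 2"
    and g: "g \<in> carrier (Gr v)" "g \<noteq> \<one>\<^bsub>Gr v\<^esub>" and h: "h \<in> carrier (Gr w)" "h \<noteq> \<one>\<^bsub>Gr w\<^esub>"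
  shows "\<not> gp_rel V E Gr [(v, g), (w, h)] [(w, h), (v, g)]"
proof
  assume "gp_rel V E Gr [(v, g), (w, h)] [(w, h), (v, g)]"
  from rel_act[OF gv gw vw card this] have
    "actW v w Gr [(v, g), (w, h)] None = actW v w Gr [(w, h), (v, g)] None"
    by (simp add: P0_def)
  then show False using vw g h gw gv
    by (simp add: actW_def actU_def actL_def actR_def nzL_def nzR_def valL_def valR_def
        group.is_monoid monoid.r_one)
qed

context
  fixes V :: "'v set" and E and Gr :: "'v \<Rightarrow> 'g monoid"
  assumes sg: "simple_graph V E" and grp: "\<forall>v\<in>V. group (Gr v)"
begin

lemma rel_words: "gp_rel V E Gr a b \<Longrightarrow> gp_word V Gr a \<and> gp_word V Gr b"
proof (induction rule: gp_rel.induct)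
  case (triv v) then show ?case using grp by (auto simp: gp_word_def group.is_monoid monoid.one_closed)
next
  case (mult v g h) then show ?case using grp by (auto simp: gp_word_def group.is_monoid monoid.m_closed)
next
  case (comm v w g h) then show ?case using sg by (auto simp: gp_word_def simple_graph_def)
qed (auto simp: gp_word_def)

lemma rel_cong: "gp_rel V E Gr x a \<Longrightarrow> gp_rel V E Gr y b \<Longrightarrow> gp_rel V E Gr (x @ y) (a @ b)"
proof -
  assume 1: "gp_rel V E Gr x a" and 2: "gp_rel V E Gr y b"
  have w: "gp_word V Gr x" "gp_word V Gr a" "gp_word V Gr y" "gp_word V Gr b"
    using rel_words 1 2 by auto
  have e: "gp_word V Gr []" by (simp add: gp_word_def)
  have "gp_rel V E Gr ([] @ x @ y) ([] @ a @ y)" by (rule gp_rel.ctxt[OF 1 e w(3)])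
  moreover have "gp_rel V E Gr (a @ y @ []) (a @ b @ [])" by (rule gp_rel.ctxt[OF 2 w(2) e])
  ultimately show ?thesis using gp_rel.trans by fastforce
qed

lemma mult_class:
  assumes "gp_word V Gr x" "gp_word V Gr y"
  shows "gp_class V E Gr x \<otimes>\<^bsub>graph_product V E Gr\<^esub> gp_class V E Gr y = gp_class V E Gr (x @ y)"
proof -
  have "gp_rel V E Gr x x" "gp_rel V E Gr y y" using assms by (auto intro: gp_rel.refl)
  then show ?thesis
    unfolding graph_product_def gp_class_def
    by (auto intro: gp_rel.trans rel_cong)
qed

lemma class_eq_rel: "gp_word V Gr x \<Longrightarrow> gp_class V E Gr x = gp_class V E Gr y \<Longrightarrow> gp_rel V E Gr y x"
  unfolding gp_class_def by (metis gp_rel.refl mem_Collect_eq)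

end


theorem lemma6p6:
  fixes V :: "'v set" and E :: "'v set set" and Gr :: "'v \<Rightarrow> 'g monoid"
    and V1 V2 :: "'v set"
  assumes graph: "simple_graph V E"
    and vgroups: "\<forall>v\<in>V. primary_grp (Gr v) \<or> infinite_cyclic_grp (Gr v)"
    and no_cone: "\<forall>v\<in>V. st E v \<noteq> V"
    and split: "V = V1 \<union> V2" "V1 \<inter> V2 = {}" "V1 \<noteq> {}" "V2 \<noteq> {}"
    and prod_iso: "(\<lambda>(a, b). a \<otimes>\<^bsub>graph_product V E Gr\<^esub> b) \<in>
        iso (DirProd ((graph_product V E Gr)\<lparr>carrier := gp_sub V E Gr V1\<rparr>)
                     ((graph_product V E Gr)\<lparr>carrier := gp_sub V E Gr V2\<rparr>))
            (graph_product V E Gr)"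
  shows "lower_cone V E Gr V1 \<and> lower_cone V E Gr V2"
proof -
  have grp: "\<forall>v\<in>V. group (Gr v)" using vgroups
    by (auto simp: primary_grp_def infinite_cyclic_grp_def cyclic_grp_def)
  have card: "\<forall>e\<in>E. card e = 2" using graph by (simp add: simple_graph_def)
  have EV: "\<forall>e\<in>E. e \<subseteq> V" using graph by (simp add: simple_graph_def)
  have nontriv: "\<exists>g\<in>carrier (Gr v). g \<noteq> \<one>\<^bsub>Gr v\<^esub>" if v: "v \<in> V" for v
  proof (rule ccontr)
    assume "\<not> ?thesis"
    then have sub: "carrier (Gr v) \<subseteq> {\<one>\<^bsub>Gr v\<^esub>}" by auto
    then have fin: "finite (carrier (Gr v))" using finite_subset by blast
    have "card (carrier (Gr v)) \<le> 1" using sub card_mono[OF _ sub] by simp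
    moreover from vgroups v fin obtain p k where "Factorial_Ring.prime (p::nat)" "k \<ge> 1" "order (Gr v) = p ^ k"
      by (auto simp: primary_grp_def infinite_cyclic_grp_def)
    moreover have "p ^ k \<ge> p" using \<open>k \<ge> 1\<close> \<open>Factorial_Ring.prime p\<close>
      by (metis One_nat_def Suc_le_eq prime_gt_0_nat self_le_power zero_less_Suc le_less)
    ultimately show False by (simp add: order_def) (metis prime_ge_2_nat le_trans not_less_eq_eq numeral_2_eq_2 One_nat_def)
  qed
  have hom: "(\<lambda>(a, b). a \<otimes>\<^bsub>(graph_product V E Gr)\<^esub> b) \<in>
        hom (DirProd ((graph_product V E Gr)\<lparr>carrier := gp_sub V E Gr V1\<rparr>) ((graph_product V E Gr)\<lparr>carrier := gp_sub V E Gr V2\<rparr>)) (graph_product V E Gr)"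
    using prod_iso by (simp add: iso_def)
  have one_in: "gp_class V E Gr [] \<in> gp_sub V E Gr Xs" for Xs
    using generate.one[of "graph_product V E Gr"] by (simp add: gp_sub_def graph_product_def)
  have incl_in: "gp_class V E Gr [(u, g)] \<in> gp_sub V E Gr Xs" if "u \<in> Xs" "g \<in> carrier (Gr u)" for Xs u g
    unfolding gp_sub_def by (rule generate.incl) (use that in \<open>auto simp: gp_incl_def\<close>)
  have adj: "{s, t} \<in> E" if s: "s \<in> V1" and t: "t \<in> V2" for s t
  proof (rule ccontr)
    assume nE: "{s, t} \<notin> E"
    have sV: "s \<in> V" and tV: "t \<in> V" using s t split by auto
    have st: "s \<noteq> t" using s t split by auto
    obtain g where g: "g \<in> carrier (Gr s)" "g \<noteq> \<one>\<^bsub>Gr s\<^esub>" using nontriv[OF sV] by blast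
    obtain h where h: "h \<in> carrier (Gr t)" "h \<noteq> \<one>\<^bsub>Gr t\<^esub>" using nontriv[OF tV] by blast
    have wg: "gp_word V Gr [(s, g)]" and wh: "gp_word V Gr [(t, h)]" and we: "gp_word V Gr []"
      using g h sV tV by (auto simp: gp_word_def)
    have a: "gp_class V E Gr [(s, g)] \<in> gp_sub V E Gr V1" using incl_in s g by blast
    have b: "gp_class V E Gr [(t, h)] \<in> gp_sub V E Gr V2" using incl_in t h by blast
    have one: "\<one>\<^bsub>(graph_product V E Gr)\<^esub> = gp_class V E Gr []" by (simp add: graph_product_def)
    note mc = mult_class[OF graph grp]
    have "(\<lambda>(a, b). a \<otimes>\<^bsub>(graph_product V E Gr)\<^esub> b) ((gp_class V E Gr [], gp_class V E Gr [(t, h)]) \<otimes>\<^bsub>DirProd ((graph_product V E Gr)\<lparr>carrier := gp_sub V E Gr V1\<rparr>) ((graph_product V E Gr)\<lparr>carrier := gp_sub V E Gr V2\<rparr>)\<^esub> (gp_class V E Gr [(s, g)], gp_class V E Gr []))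
      = (\<lambda>(a, b). a \<otimes>\<^bsub>(graph_product V E Gr)\<^esub> b) (gp_class V E Gr [], gp_class V E Gr [(t, h)]) \<otimes>\<^bsub>(graph_product V E Gr)\<^esub> (\<lambda>(a, b). a \<otimes>\<^bsub>(graph_product V E Gr)\<^esub> b) (gp_class V E Gr [(s, g)], gp_class V E Gr [])"
      by (rule hom_mult[OF hom]) (use a b one_in in auto)
    then have "gp_class V E Gr [(s, g), (t, h)] = gp_class V E Gr [(t, h), (s, g)]"
      using wg wh we by (simp add: mc gp_word_def)
    then have "gp_rel V E Gr [(t, h), (s, g)] [(s, g), (t, h)]"
      using class_eq_rel[OF graph grp] wg wh by (auto simp: gp_word_def)
    then have "gp_rel V E Gr [(s, g), (t, h)] [(t, h), (s, g)]" by (rule gp_rel.sym)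
    then show False using noncomm[of Gr s t E g h V] grp sV tV st nE card g h by blast
  qed
  have adj': "{s, t} \<in> E" if "s \<in> V1" "t \<in> V2 \<or> s \<in> V2" "t \<in> V1 \<or> t \<in> V2" "(s \<in> V1 \<and> t \<in> V2) \<or> (s \<in> V2 \<and> t \<in> V1)" for s t
    using that adj by (metis insert_commute)
  have stV: "st E t \<subseteq> V" if "t \<in> V" for t
    using that EV by (auto simp: st_def lk_def)
  have cone: "lower_cone V E Gr A"
    if AB: "V = A \<union> B" "A \<inter> B = {}" and jn: "\<forall>x\<in>A. \<forall>y\<in>B. {x, y} \<in> E" for A B
  proof -
    have "s \<in> A" if t: "t \<in> A" and s: "s \<in> V" and le: "le_tau E Gr s t" for s t
    proof (rule ccontr)
      assume "s \<notin> A"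
      then have sB: "s \<in> B" using s AB by auto
      then have ne: "s \<noteq> t" using t AB by auto
      have A_lk: "A \<subseteq> lk E s" using jn sB by (auto simp: lk_def insert_commute)
      have "A - {t} \<subseteq> st E t"
      proof -
        from le ne have "lk E s \<subseteq> st E t \<or> st E s \<subseteq> st E t" by (auto simp: le_tau_def)
        then show ?thesis using A_lk by (auto simp: st_def)
      qed
      moreover have "B \<subseteq> st E t" using jn t by (auto simp: st_def lk_def insert_commute)
      moreover have "t \<in> st E t" by (simp add: st_def)
      ultimately have "V \<subseteq> st E t" using AB by blast
      then have "st E t = V" using stV t AB by blast
      then show False using no_cone t AB by auto
    qed
    then show ?thesis using AB by (auto simp: lower_cone_def)
  qed
  have j1: "\<forall>x\<in>V1. \<forall>y\<in>V2. {x, y} \<in> E" using adj by blast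
  have j2: "\<forall>x\<in>V2. \<forall>y\<in>V1. {x, y} \<in> E" using adj by (metis insert_commute)
  show ?thesis using cone[OF split(1,2) j1] cone[of V2 V1] split j2 by (auto simp: Un_commute Int_commute)
qed

end
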